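(* Let $\varphi\in\mathbb{R}$, let $N$ be a positive integer, and let $N_x,N_y\in\{0,1,\dots,N\}$ satisfy $$\Big|\frac{N_x}{N}-\frac{1+\cos(2\pi\varphi)}{2}\Big|\le 0.306,\qquad \Big|\frac{N_y}{N}-\frac{1+\sin(2\pi\varphi)}{2}\Big|\le 0.306.$$ Put $t=\frac{1}{2\pi}\big(\mathrm{atan2}(2N_y/N-1,\,2N_x/N-1)\big)_{\mathrm{mod}\,2\pi}\in[0,1)$ and $x=(t-1/6)_{\mathrm{mod}\,1}$. Then $(\varphi)_{\mathrm{mod}\,1}$ lies in the open arc $(x,x+1/3)$ on the circle of unit circumference, i.e. $\big((\varphi)_{\mathrm{mod}\,1}-x\big)_{\mathrm{mod}\,1}\in(0,1/3)$.
   Context: $(a)_{\mathrm{mod}\,c}$ denotes the representative of $a$ in $[0,c)$. $\mathrm{atan2}(y,x)$ is the standard two-argument arctangent, the polar angle of the point $(x,y)\ne(0,0)$. *)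

theory Defs
  imports "HOL-Analysis.Analysis" "HOL-Complex_Analysis.Complex_Analysis"
begin

text \<open>Standard two-argument arctangent: the polar angle of (x,y) in (-pi,pi];
  by convention atan2 0 0 = 0.\<close>
definition atan2 :: "real \<Rightarrow> real \<Rightarrow> real" where
  "atan2 y x = Arg (Complex x y)"

definition rmod :: "real \<Rightarrow> real \<Rightarrow> real" where
  "rmod a c = a - c * of_int \<lfloor>a / c\<rfloor>"

end

theory Submission
  imports Defs
begin

lemma geom:
  fixes u v c s :: real
  assumes cs: "c^2 + s^2 = 1" and hu: "\<bar>u - c\<bar> \<le> 0.612" and hv: "\<bar>v - s\<bar> \<le> 0.612"
  shows "u * c + v * s > 0 \<and> 4*(u * c+v * s)^2 > u^2 + v^2"
proof -
  define p where "p = u - c"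
  define q where "q = v - s"
  have p2: "p^2 \<le> 0.612^2" using hu unfolding p_def
    by (metis abs_le_square_iff abs_numeral abs_of_nonneg zero_le_numeral power2_abs abs_ge_zero order.trans)
  have q2: "q^2 \<le> 0.612^2" using hv unfolding q_def
    by (metis abs_le_square_iff abs_numeral abs_of_nonneg zero_le_numeral power2_abs abs_ge_zero order.trans)
  define a where "a = p * c + q * s"
  have cauchy: "a^2 \<le> p^2 + q^2"
  proof -
    have "(p^2+q^2)*(c^2+s^2) - a^2 = (p * s - q * c)^2" unfolding a_def by (simp add: power2_eq_square algebra_simps)
    then have "(p^2+q^2) - a^2 = (p * s - q * c)^2" using cs by simp
    then show ?thesis by (metis diff_ge_0_iff_ge zero_le_power2)
  qed
  have r: "p^2 + q^2 < 3/4" using p2 q2 by (simp add: power2_eq_square)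
  have a1: "a > -1"
  proof (rule ccontr)
    assume "\<not> a > -1" then have "a \<le> -1" by simp
    then have "1 \<le> (-a)^2" by (intro one_le_power) simp
    then have "a^2 \<ge> 1" by simp
    then show False using cauchy r by simp
  qed
  have e1: "u * c + v * s = 1 + a" unfolding a_def p_def q_def using cs by (simp add: power2_eq_square algebra_simps)
  have e2: "u^2 + v^2 = 1 + 2*a + (p^2+q^2)" unfolding a_def p_def q_def using cs by (simp add: power2_eq_square algebra_simps)
  have "4*(1+a)^2 - (1 + 2*a + (p^2+q^2)) = (2*a + 3/2)^2 + (3/4 - (p^2+q^2))"
    by (simp add: power2_eq_square algebra_simps)
  moreover have "(2*a + 3/2)^2 \<ge> 0" by simp
  ultimately have "4*(1+a)^2 > 1 + 2*a + (p^2+q^2)" using r by linarith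
  then show ?thesis using e1 e2 a1 by simp
qed

lemma cosgt:
  fixes d :: real
  assumes "cos d > 1/2"
  shows "\<exists>m::int. \<bar>d - 2*pi*m\<bar> < pi/3"
proof -
  define m where "m = \<lfloor>d/(2*pi) + 1/2\<rfloor>"
  define e where "e = d - 2*pi*m"
  have "m \<le> d/(2*pi) + 1/2" "d/(2*pi) + 1/2 < m + 1" unfolding m_def by linarith+
  then have lo: "-pi \<le> e" and hi: "e < pi" unfolding e_def using pi_gt_zero
    by (simp_all add: field_simps)
  have c1: "cos (2*pi*real_of_int m) = 1" by (rule cos_int_2pin)
  have s1: "sin (2*pi*real_of_int m) = 0" by (rule sin_int_2pin)
  have "cos e = cos d" unfolding e_def
    by (simp only: cos_diff c1 s1 mult_1_right mult_zero_right add_0_right)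
  then have ce: "cos e > 1/2" using assms by simp
  have "\<bar>e\<bar> < pi/3"
  proof (rule ccontr)
    assume "\<not> \<bar>e\<bar> < pi/3"
    then have "pi/3 \<le> \<bar>e\<bar>" by simp
    moreover have "\<bar>e\<bar> \<le> pi" using lo hi by simp
    ultimately have "cos \<bar>e\<bar> \<le> cos (pi/3)" by (intro cos_monotone_0_pi_le) auto
    then show False using ce by (simp add: cos_60)
  qed
  then show ?thesis unfolding e_def by blast
qed

lemma rmod1: "0 \<le> b \<Longrightarrow> b < 1 \<Longrightarrow> rmod (b + of_int k) 1 = b"
  unfolding rmod_def by (simp add: floor_unique)

theorem mainTheorem2:
  fixes \<phi> :: real and N Nx Ny :: nat
  assumes "N > 0" and "Nx \<le> N" and "Ny \<le> N"
    and "\<bar>real Nx / real N - (1 + cos (2 * pi * \<phi>)) / 2\<bar> \<le> 0.306"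
    and "\<bar>real Ny / real N - (1 + sin (2 * pi * \<phi>)) / 2\<bar> \<le> 0.306"
  shows "let t = rmod (atan2 (2 * real Ny / real N - 1) (2 * real Nx / real N - 1)) (2 * pi) / (2 * pi);
             x = rmod (t - 1/6) 1
         in 0 < rmod (rmod \<phi> 1 - x) 1 \<and> rmod (rmod \<phi> 1 - x) 1 < 1/3"
proof -
  define u where "u = 2 * real Ny / real N - 1"
  define w where "w = 2 * real Nx / real N - 1"
  define \<theta> where "\<theta> = 2*pi*\<phi>"
  have ew: "w - cos \<theta> = 2 * (real Nx / real N - (1 + cos (2 * pi * \<phi>)) / 2)"
    unfolding w_def \<theta>_def by (simp add: field_simps)
  have eu: "u - sin \<theta> = 2 * (real Ny / real N - (1 + sin (2 * pi * \<phi>)) / 2)"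
    unfolding u_def \<theta>_def by (simp add: field_simps)
  have hw: "\<bar>w - cos \<theta>\<bar> \<le> 0.612" using assms(4) unfolding ew abs_mult by simp
  have hu: "\<bar>u - sin \<theta>\<bar> \<le> 0.612" using assms(5) unfolding eu abs_mult by simp
  have g: "w * cos \<theta> + u * sin \<theta> > 0 \<and> 4*(w * cos \<theta>+u * sin \<theta>)^2 > w^2 + u^2"
    by (rule geom[OF _ hw hu]) simp
  define z where "z = Complex w u"
  define \<alpha> where "\<alpha> = Arg z"
  define r where "r = cmod z"
  have zr: "z = rcis r \<alpha>" unfolding r_def \<alpha>_def by (simp add: rcis_cmod_Arg)
  have wr: "w = r * cos \<alpha>" and ur: "u = r * sin \<alpha>"
    using arg_cong[OF zr, of Re] arg_cong[OF zr, of Im] by (simp_all add: z_def rcis_def)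
  have r0: "r \<ge> 0" unfolding r_def by simp
  have r2: "w^2 + u^2 = r^2" using wr ur by (simp add: power_mult_distrib algebra_simps flip: distrib_left)
  have ccs: "w * cos \<theta> + u * sin \<theta> = r * cos (\<alpha> - \<theta>)" using wr ur by (simp add: cos_diff algebra_simps)
  have rpos: "r > 0" using g ccs r0 by (cases "r = 0") auto
  have "4*(r * cos (\<alpha> - \<theta>))^2 > r^2" using g ccs r2 by simp
  then have "4*(cos (\<alpha> - \<theta>))^2 > 1" using rpos by (simp add: power_mult_distrib)
  moreover have "cos (\<alpha> - \<theta>) > 0" using g ccs rpos by (simp add: zero_less_mult_iff)
  ultimately have "cos (\<alpha> - \<theta>) > 1/2"
  proof -
    assume A: "4*(cos (\<alpha> - \<theta>))^2 > 1" and B: "cos (\<alpha> - \<theta>) > 0"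
    show ?thesis
    proof (rule ccontr)
      assume "\<not> cos (\<alpha> - \<theta>) > 1/2"
      then have C: "cos (\<alpha> - \<theta>) \<le> 1/2" by simp
      have "cos (\<alpha> - \<theta>) * cos (\<alpha> - \<theta>) \<le> 1/2 * (1/2)"
        by (rule mult_mono[OF C C]) (use B in auto)
      then show False using A by (simp add: power2_eq_square)
    qed
  qed
  then obtain m :: int where hm: "\<bar>\<alpha> - \<theta> - 2*pi*m\<bar> < pi/3" using cosgt by blast
  define \<delta> where "\<delta> = (\<alpha> - \<theta> - 2*pi*m) / (2*pi)"
  have d1: "\<bar>\<delta>\<bar> < 1/6"
  proof -
    have "\<bar>\<delta>\<bar> = \<bar>\<alpha> - \<theta> - 2*pi*m\<bar>/(2*pi)" unfolding \<delta>_def using pi_gt_zero by (simp add: abs_divide)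
    also have "\<dots> < (pi/3)/(2*pi)" by (rule divide_strict_right_mono[OF hm]) (use pi_gt_zero in simp)
    also have "\<dots> = 1/6" using pi_gt_zero by simp
    finally show ?thesis .
  qed
  have ad: "\<alpha>/(2*pi) = \<phi> + \<delta> + m" unfolding \<delta>_def \<theta>_def using pi_gt_zero by (simp add: field_simps)
  define t where "t = rmod \<alpha> (2*pi) / (2*pi)"
  have t: "t = \<alpha>/(2*pi) - \<lfloor>\<alpha>/(2*pi)\<rfloor>" unfolding t_def rmod_def using pi_gt_zero
    by (simp add: field_simps)
  have at: "atan2 u w = \<alpha>" unfolding atan2_def \<alpha>_def z_def by simp
  have key: "rmod \<phi> 1 - rmod (t - 1/6) 1 = (1/6 - \<delta>) + of_int (\<lfloor>\<alpha>/(2*pi)\<rfloor> + \<lfloor>t - 1/6\<rfloor> - m - \<lfloor>\<phi>\<rfloor>)"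
  proof -
    have "rmod \<phi> 1 = \<phi> - \<lfloor>\<phi>\<rfloor>" unfolding rmod_def by simp
    moreover have "rmod (t - 1/6) 1 = t - 1/6 - \<lfloor>t - 1/6\<rfloor>" unfolding rmod_def by simp
    ultimately show ?thesis using t ad by simp
  qed
  have "rmod (rmod \<phi> 1 - rmod (t - 1/6) 1) 1 = 1/6 - \<delta>"
    unfolding key using d1 by (intro rmod1) auto
  moreover have "0 < 1/6 - \<delta>" "1/6 - \<delta> < 1/3" using d1 by auto
  ultimately show ?thesis unfolding Let_def u_def[symmetric] w_def[symmetric] at t_def[symmetric] by simp
qed

end
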